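(* Let $\phi_1,\dots,\phi_{n+m}$ be arbitrary functions of one variable and $\bar\beta=\{\beta_1,\dots,\beta_{n+m}\}$. Define $\Phi_{n+m}(\bar\beta)=\Delta_{n+m}(\bar\beta)\det_{n+m}\big[\phi_k(\beta_j)\big]_{j,k=1}^{n+m}$. Then $$\Phi_{n+m}(\bar\beta)=\sum \Delta_n(\bar\beta_{\rm I})\det_{k=1,\dots,n}\phi_k(\beta_{{\rm I}_j})\cdot\Delta_m(\bar\beta_{\rm II})\det_{k=1,\dots,m}\phi_{n+k}(\beta_{{\rm II}_j})\cdot g(\bar\beta_{\rm II},\bar\beta_{\rm I}),$$ where the sum runs over partitions $\bar\beta\Rightarrow\{\bar\beta_{\rm I},\bar\beta_{\rm II}\}$ with $\#\bar\beta_{\rm I}=n$, $\#\bar\beta_{\rm II}=m$, the elements of each subset being listed in increasing order of their original indices ($\beta_{{\rm I}_1},\beta_{{\rm I}_2},\dots$ and $\beta_{{\rm II}_1},\dots$).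
   Context: Fix $c\neq0$ and $g(u,v)=\frac{c}{u-v}$. For sets, $g(\bar u,\bar v)=\prod_{u_j\in\bar u}\prod_{v_k\in\bar v}g(u_j,v_k)$. For an ordered set $\bar v=\{v_1,\dots,v_p\}$, $\Delta_p(\bar v)=\prod_{j>k}g(v_j,v_k)$ (with $\Delta_0=1$). *)

theory Defs
  imports "HOL-Combinatorics.Permutations"
begin

definition gfun :: "'a::field \<Rightarrow> 'a \<Rightarrow> 'a \<Rightarrow> 'a" where
  "gfun c u v = c / (u - v)"

definition gset :: "'a::field \<Rightarrow> ('i \<Rightarrow> 'a) \<Rightarrow> 'i set \<Rightarrow> 'i set \<Rightarrow> 'a" where
  "gset c b U V = (\<Prod>u\<in>U. \<Prod>v\<in>V. gfun c (b u) (b v))"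

definition Delta :: "'a::field \<Rightarrow> nat \<Rightarrow> (nat \<Rightarrow> 'a) \<Rightarrow> 'a" where
  "Delta c p v = (\<Prod>(j,k)\<in>{(j,k). 1 \<le> k \<and> k < j \<and> j \<le> p}. gfun c (v j) (v k))"

definition detn :: "nat \<Rightarrow> (nat \<Rightarrow> nat \<Rightarrow> 'a::comm_ring_1) \<Rightarrow> 'a" where
  "detn p A = (\<Sum>\<sigma> | \<sigma> permutes {1..p}. of_int (sign \<sigma>) * (\<Prod>j\<in>{1..p}. A j (\<sigma> j)))"

definition idx :: "nat set \<Rightarrow> nat \<Rightarrow> nat" where
  "idx S j = sorted_list_of_set S ! (j - 1)"

definition Phi :: "'a::field \<Rightarrow> nat \<Rightarrow> (nat \<Rightarrow> 'a \<Rightarrow> 'a) \<Rightarrow> (nat \<Rightarrow> 'a) \<Rightarrow> 'a" where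
  "Phi c N \<phi> \<beta> = Delta c N \<beta> * detn N (\<lambda>j k. \<phi> k (\<beta> j))"

end

theory Submission
  imports Defs
begin


definition PS :: "nat set \<Rightarrow> (nat \<times> nat) set" where
  "PS S = {(j,k). j \<in> S \<and> k \<in> S \<and> k < j}"

definition hm :: "(nat \<Rightarrow> nat) \<Rightarrow> nat \<times> nat \<Rightarrow> nat \<times> nat" where
  "hm \<sigma> x = (max (\<sigma> (fst x)) (\<sigma> (snd x)), min (\<sigma> (fst x)) (\<sigma> (snd x)))"

lemma sym_reindex:
  assumes p: "\<sigma> permutes S"
    and sym: "\<And>a b. a \<in> S \<Longrightarrow> b \<in> S \<Longrightarrow> a \<noteq> b \<Longrightarrow> F a b = F b a"
  shows "(\<Prod>(j,k)\<in>PS S. F (\<sigma> j) (\<sigma> k)) = (\<Prod>(j,k)\<in>PS S. F j k)"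
proof (rule prod.reindex_bij_witness[where j="hm \<sigma>" and i="hm (inv \<sigma>)"])
  have inj: "inj \<sigma>" using p permutes_inj by blast
  have iv: "\<And>x. inv \<sigma> (\<sigma> x) = x" "\<And>x. \<sigma> (inv \<sigma> x) = x"
    using p permutes_inverses by metis+
  have ins: "\<And>x. (\<sigma> x \<in> S) = (x \<in> S)" "\<And>x. (inv \<sigma> x \<in> S) = (x \<in> S)"
    using p permutes_in_image permutes_inv by (metis, metis permutes_in_image)
  have ne: "\<And>x y. x \<noteq> y \<Longrightarrow> \<sigma> x \<noteq> \<sigma> y" "\<And>x y. x \<noteq> y \<Longrightarrow> inv \<sigma> x \<noteq> inv \<sigma> y"
    using iv by metis+
  fix a assume a: "a \<in> PS S"
  then obtain x y where xy: "a = (x,y)" "x \<in> S" "y \<in> S" "y < x" by (auto simp: PS_def)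
  show "hm (inv \<sigma>) (hm \<sigma> a) = a" using xy iv ne(1)[of x y]
    by (cases "\<sigma> x < \<sigma> y") (auto simp: hm_def max_def min_def)
  show "hm \<sigma> a \<in> PS S" using xy ins ne(1)[of x y]
    by (auto simp: hm_def max_def min_def PS_def)
  show "(case hm \<sigma> a of (j, k) \<Rightarrow> F j k) = (case a of (j, k) \<Rightarrow> F (\<sigma> j) (\<sigma> k))"
    using xy ins ne(1)[of x y] sym[of "\<sigma> x" "\<sigma> y"]
    by (auto simp: hm_def max_def min_def)
next
  have iv: "\<And>x. inv \<sigma> (\<sigma> x) = x" "\<And>x. \<sigma> (inv \<sigma> x) = x"
    using p permutes_inverses by metis+
  have ins: "\<And>x. (\<sigma> x \<in> S) = (x \<in> S)" "\<And>x. (inv \<sigma> x \<in> S) = (x \<in> S)"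
    using p permutes_in_image permutes_inv by (metis, metis permutes_in_image)
  have ne: "\<And>x y. x \<noteq> y \<Longrightarrow> \<sigma> x \<noteq> \<sigma> y" "\<And>x y. x \<noteq> y \<Longrightarrow> inv \<sigma> x \<noteq> inv \<sigma> y"
    using iv by metis+
  fix a assume a: "a \<in> PS S"
  then obtain x y where xy: "a = (x,y)" "x \<in> S" "y \<in> S" "y < x" by (auto simp: PS_def)
  show "hm \<sigma> (hm (inv \<sigma>) a) = a" using xy iv ne(2)[of x y]
    by (cases "inv \<sigma> x < inv \<sigma> y") (auto simp: hm_def max_def min_def)
  show "hm (inv \<sigma>) a \<in> PS S" using xy ins ne(2)[of x y]
    by (auto simp: hm_def max_def min_def PS_def)
qed


definition sg :: "nat \<Rightarrow> nat \<Rightarrow> int" where "sg a b = (if b < a then 1 else -1)"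
definition eps :: "nat set \<Rightarrow> (nat \<Rightarrow> nat) \<Rightarrow> int" where
  "eps S \<pi> = (\<Prod>(j,k)\<in>PS S. sg (\<pi> j) (\<pi> k))"

lemma sg_sq: "sg a b * sg a b = 1" by (simp add: sg_def)
lemma sg_anti: "a \<noteq> b \<Longrightarrow> sg a b = - sg b a" by (simp add: sg_def)

lemma Delta_PS: "Delta c p v = (\<Prod>(j,k)\<in>PS {1..p}. gfun c (v j) (v k))"
  unfolding Delta_def PS_def
  by (rule prod.cong) auto

lemma gfun_anti: "gfun c u v = - gfun c v u"
  unfolding gfun_def by (metis divide_minus_right minus_diff_eq)

lemma finite_PS: "finite S \<Longrightarrow> finite (PS S)"
  unfolding PS_def by (rule finite_subset[of _ "S \<times> S"]) auto

lemma Delta_perm: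
  assumes p: "\<sigma> permutes {1..N}"
  shows "Delta c N (v \<circ> \<sigma>) = of_int (eps {1..N} \<sigma>) * Delta c N v"
proof -
  define G where "G a b = of_int (sg a b) * gfun c (v a) (v b)" for a b
  have e1: "gfun c (v (\<sigma> j)) (v (\<sigma> k)) = of_int (sg (\<sigma> j) (\<sigma> k)) * G (\<sigma> j) (\<sigma> k)" for j k
    unfolding G_def mult.assoc[symmetric] of_int_mult[symmetric] sg_sq by simp
  have "Delta c N (v \<circ> \<sigma>) = (\<Prod>(j,k)\<in>PS {1..N}. of_int (sg (\<sigma> j) (\<sigma> k)) * G (\<sigma> j) (\<sigma> k))"
    unfolding Delta_PS using e1 by (simp add: case_prod_unfold)
  also have "\<dots> = of_int (eps {1..N} \<sigma>) * (\<Prod>(j,k)\<in>PS {1..N}. G (\<sigma> j) (\<sigma> k))"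
    unfolding eps_def by (simp add: case_prod_unfold prod.distrib of_int_prod)
  also have "(\<Prod>(j,k)\<in>PS {1..N}. G (\<sigma> j) (\<sigma> k)) = (\<Prod>(j,k)\<in>PS {1..N}. G j k)"
  proof (rule sym_reindex[OF p])
    fix a b :: nat assume "a \<noteq> b"
    then have "sg a b = - sg b a" by (rule sg_anti)
    moreover have "gfun c (v a) (v b) = - gfun c (v b) (v a)" by (rule gfun_anti)
    ultimately show "G a b = G b a" unfolding G_def by simp
  qed
  also have "\<dots> = Delta c N v"
    unfolding Delta_PS G_def by (rule prod.cong) (auto simp: PS_def sg_def)
  finally show ?thesis .
qed

lemma eps_mult:
  assumes p: "\<pi> permutes S" and q: "\<sigma> permutes S"
  shows "eps S (\<pi> \<circ> \<sigma>) = eps S \<pi> * eps S \<sigma>"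
proof -
  define H where "H a b = sg (\<pi> a) (\<pi> b) * sg a b" for a b
  have inj: "inj \<pi>" using p permutes_inj by blast
  have e1: "sg (\<pi> (\<sigma> j)) (\<pi> (\<sigma> k)) = H (\<sigma> j) (\<sigma> k) * sg (\<sigma> j) (\<sigma> k)" for j k
    unfolding H_def mult.assoc sg_sq by simp
  have "eps S (\<pi> \<circ> \<sigma>) = (\<Prod>(j,k)\<in>PS S. H (\<sigma> j) (\<sigma> k) * sg (\<sigma> j) (\<sigma> k))"
    unfolding eps_def using e1 by (simp add: case_prod_unfold)
  also have "\<dots> = (\<Prod>(j,k)\<in>PS S. H (\<sigma> j) (\<sigma> k)) * eps S \<sigma>"
    unfolding eps_def by (simp add: case_prod_unfold prod.distrib)
  also have "(\<Prod>(j,k)\<in>PS S. H (\<sigma> j) (\<sigma> k)) = (\<Prod>(j,k)\<in>PS S. H j k)"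
  proof (rule sym_reindex[OF q])
    fix a b :: nat assume ab: "a \<noteq> b"
    then have "\<pi> a \<noteq> \<pi> b" using inj by (meson inj_eq)
    then have "sg (\<pi> a) (\<pi> b) = - sg (\<pi> b) (\<pi> a)" by (rule sg_anti)
    moreover have "sg a b = - sg b a" using ab by (rule sg_anti)
    ultimately show "H a b = H b a" unfolding H_def by simp
  qed
  also have "\<dots> = eps S \<pi>"
    unfolding eps_def H_def by (rule prod.cong) (auto simp: PS_def sg_def)
  finally show ?thesis .
qed

lemma eps_id: "eps S id = 1"
  unfolding eps_def by (rule prod.neutral) (auto simp: PS_def sg_def)

lemma eps_adj:
  assumes "a \<in> S" "Suc a \<in> S" "finite S"
  shows "eps S (transpose a (Suc a)) = -1"
proof -
  have "eps S (transpose a (Suc a)) = (\<Prod>x\<in>PS S. if x = (Suc a, a) then -1 else 1)"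
    unfolding eps_def
    by (rule prod.cong) (auto simp: PS_def sg_def transpose_def split: if_splits)
  also have "\<dots> = -1"
  proof -
    have "(Suc a, a) \<in> PS S" using assms by (auto simp: PS_def)
    then show ?thesis using assms by (simp add: prod.delta finite_PS)
  qed
  finally show ?thesis .
qed

lemma eps_transpose_lt:
  assumes "1 \<le> a" "a < b" "b \<le> N"
  shows "eps {1..N} (transpose a b) = -1"
  using assms
proof (induction "b - a" arbitrary: a)
  case 0 then show ?case by simp
next
  case (Suc d)
  show ?case
  proof (cases "b = Suc a")
    case True then show ?thesis using Suc.prems eps_adj[of a "{1..N}"] by simp
  next
    case False
    have eq: "transpose a b = transpose a (Suc a) \<circ> transpose (Suc a) b \<circ> transpose a (Suc a)"
      using False Suc.prems by (auto simp: fun_eq_iff transpose_def)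
    have pa: "transpose a (Suc a) permutes {1..N}" "transpose (Suc a) b permutes {1..N}"
      using Suc.prems False by (auto intro!: permutes_swap_id)
    have "eps {1..N} (transpose (Suc a) b) = -1"
      using Suc False by auto
    have ea: "eps {1..N} (transpose a (Suc a)) = -1"
      using eps_adj[of a "{1..N}"] Suc.prems False by simp
    have "eps {1..N} (transpose a b) = eps {1..N} (transpose a (Suc a) \<circ> transpose (Suc a) b) * eps {1..N} (transpose a (Suc a))"
      unfolding eq by (rule eps_mult) (use pa in \<open>auto intro: permutes_compose\<close>)
    also have "\<dots> = -1" using eps_mult[OF pa] ea \<open>eps {1..N} (transpose (Suc a) b) = -1\<close> by simp
    finally show ?thesis .
  qed
qed

lemma eps_sign:
  assumes p: "p permutes {1..N}"
  shows "eps {1..N} p = sign p"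
  using p finite_atLeastAtMost
proof (induction p rule: permutes_induct)
  case id then show ?case using eps_id[of "{1..N}"] by (simp add: id_def)
next
  case (swap a b p)
  have t: "eps {1..N} (transpose a b) = -1"
  proof (cases "a < b")
    case True then show ?thesis using swap eps_transpose_lt by auto
  next
    case False
    then have "eps {1..N} (transpose b a) = -1" using swap eps_transpose_lt[of b a N] by auto
    then show ?thesis by (metis transpose_commute)
  qed
  have pt: "transpose a b permutes {1..N}" using swap by (intro permutes_swap_id)
  have "permutation p" "permutation (transpose a b)"
    using swap pt permutation_permutes by blast+
  then have "sign (transpose a b \<circ> p) = - sign p"
    using swap by (simp add: sign_compose sign_swap_id)
  moreover have "eps {1..N} (transpose a b \<circ> p) = - sign p"
    using swap t eps_mult[OF pt \<open>p permutes {1..N}\<close>] by simp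
  ultimately show ?case by (simp only:)
qed




lemma idx_bij: assumes f: "finite X" shows "bij_betw (idx X) {1..card X} X"
proof -
  let ?xs = "sorted_list_of_set X"
  have b1: "bij_betw (\<lambda>j. j - 1) {1..card X} {..<card X}"
    by (rule bij_betw_byWitness[where f'="Suc"]) auto
  have b2: "bij_betw ((!) ?xs) {..<card X} X"
    by (rule bij_betw_nth) (simp_all add: f)
  have "bij_betw ((!) ?xs \<circ> (\<lambda>j. j-1)) {1..card X} X" by (rule bij_betw_trans[OF b1 b2])
  then show ?thesis unfolding idx_def[abs_def] o_def .
qed

definition pI :: "nat \<Rightarrow> nat \<Rightarrow> nat set \<Rightarrow> nat \<Rightarrow> nat" where
  "pI n m I j = (if 1 \<le> j \<and> j \<le> n then idx I j
     else if n < j \<and> j \<le> n + m then idx ({1..n+m} - I) (j - n) else j)"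

lemma pI_props:
  assumes I: "I \<subseteq> {1..n+m}" "card I = n"
  defines "II \<equiv> {1..n+m} - I"
  shows "pI n m I permutes {1..n+m}"
    and "\<And>j. j \<in> {1..n} \<Longrightarrow> pI n m I j = idx I j"
    and "\<And>j. j \<in> {1..m} \<Longrightarrow> pI n m I (n + j) = idx II j"
    and "bij_betw (pI n m I) {1..n} I"
    and "bij_betw (pI n m I) {n+1..n+m} II"
    and "card II = m"
proof -
  have fI: "finite I" using I finite_subset by blast
  show cII: "card II = m" unfolding II_def using I fI by (simp add: card_Diff_subset)
  show "\<And>j. j \<in> {1..n} \<Longrightarrow> pI n m I j = idx I j" by (simp add: pI_def)
  show "\<And>j. j \<in> {1..m} \<Longrightarrow> pI n m I (n + j) = idx II j" by (simp add: pI_def II_def)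
  have b1: "bij_betw (pI n m I) {1..n} I"
    using idx_bij[OF fI] I(2) by (subst bij_betw_cong[where g="idx I"]) (auto simp: pI_def)
  have s: "bij_betw (\<lambda>j. j - n) {n+1..n+m} {1..m}"
    by (rule bij_betw_byWitness[where f'="\<lambda>j. j + n"]) auto
  have "bij_betw (idx II \<circ> (\<lambda>j. j - n)) {n+1..n+m} II"
    by (rule bij_betw_trans[OF s]) (use idx_bij[of II] cII in \<open>simp add: II_def\<close>)
  then have b2: "bij_betw (pI n m I) {n+1..n+m} II"
    by (subst bij_betw_cong[where g="idx II \<circ> (\<lambda>j. j - n)"]) (auto simp: pI_def II_def)
  show "bij_betw (pI n m I) {1..n} I" by (fact b1)
  show "bij_betw (pI n m I) {n+1..n+m} II" by (fact b2)
  have "bij_betw (pI n m I) ({1..n} \<union> {n+1..n+m}) (I \<union> II)"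
    by (rule bij_betw_combine[OF b1 b2]) (auto simp: II_def)
  moreover have "{1..n} \<union> {n+1..n+m} = {1..n+m}" by auto
  moreover have "I \<union> II = {1..n+m}" using I by (auto simp: II_def)
  ultimately have "bij_betw (pI n m I) {1..n+m} {1..n+m}" by simp
  then show "pI n m I permutes {1..n+m}"
    by (rule bij_imp_permutes) (auto simp: pI_def)
qed

lemma Delta_Suc:
  "Delta c (Suc p) w = Delta c p w * (\<Prod>k\<in>{1..p}. gfun c (w (Suc p)) (w k))"
proof -
  have e: "PS {1..Suc p} = PS {1..p} \<union> (\<lambda>k. (Suc p, k)) ` {1..p}"
    by (auto simp: PS_def)
  have "Delta c (Suc p) w = (\<Prod>(j,k)\<in>PS {1..p}. gfun c (w j) (w k)) *
      (\<Prod>(j,k)\<in>(\<lambda>k. (Suc p, k)) ` {1..p}. gfun c (w j) (w k))"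
    unfolding Delta_PS e
    by (rule prod.union_disjoint[OF finite_PS]) (auto simp: PS_def)
  also have "(\<Prod>(j,k)\<in>(\<lambda>k. (Suc p, k)) ` {1..p}. gfun c (w j) (w k)) =
      (\<Prod>k\<in>{1..p}. gfun c (w (Suc p)) (w k))"
    by (subst prod.reindex) (auto simp: inj_on_def)
  finally show ?thesis by (simp add: Delta_PS)
qed

lemma Delta_split:
  "Delta c (n + m) w = Delta c n w * Delta c m (\<lambda>j. w (n + j)) *
     (\<Prod>j\<in>{1..m}. \<Prod>k\<in>{1..n}. gfun c (w (n + j)) (w k))"
proof (induction m)
  case 0
  have "{(j,k). 1 \<le> k \<and> k < j \<and> j \<le> (0::nat)} = {}" by auto
  then have "Delta c 0 v = 1" for v unfolding Delta_def by (simp only: prod.empty)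
  then show ?case by simp
next
  case (Suc m)
  have sp: "{1..n+m} = {1..n} \<union> (\<lambda>j. n + j) ` {1..m}" 
    by (auto simp: image_iff)
  have "(\<Prod>k\<in>{1..n+m}. gfun c (w (Suc (n+m))) (w k)) =
     (\<Prod>k\<in>{1..n}. gfun c (w (Suc (n+m))) (w k)) * (\<Prod>k\<in>(\<lambda>j. n + j) ` {1..m}. gfun c (w (Suc (n+m))) (w k))"
    unfolding sp by (rule prod.union_disjoint) auto
  also have "(\<Prod>k\<in>(\<lambda>j. n + j) ` {1..m}. gfun c (w (Suc (n+m))) (w k)) = (\<Prod>k\<in>{1..m}. gfun c (w (n + Suc m)) (w (n+k)))"
    by (subst prod.reindex) auto
  finally have e: "(\<Prod>k\<in>{1..n+m}. gfun c (w (Suc (n+m))) (w k)) =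
     (\<Prod>k\<in>{1..n}. gfun c (w (n + Suc m)) (w k)) * (\<Prod>k\<in>{1..m}. gfun c (w (n + Suc m)) (w (n+k)))" by simp
  have e2: "(\<Prod>j\<in>{1..Suc m}. \<Prod>k\<in>{1..n}. gfun c (w (n + j)) (w k)) =
     (\<Prod>j\<in>{1..m}. \<Prod>k\<in>{1..n}. gfun c (w (n + j)) (w k)) * (\<Prod>k\<in>{1..n}. gfun c (w (n + Suc m)) (w k))"
    by simp
  show ?case
    using Suc.IH Delta_Suc[of c "n+m" w] Delta_Suc[of c m "\<lambda>j. w (n + j)"] e e2
    by (simp add: ac_simps)
qed




definition shft :: "nat \<Rightarrow> nat \<Rightarrow> (nat \<Rightarrow> nat) \<Rightarrow> nat \<Rightarrow> nat" where
  "shft n m \<tau> j = (if n < j \<and> j \<le> n + m then n + \<tau> (j - n) else j)"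

lemma transpose_shift: "transpose (n + a) (n + b) (n + x) = n + transpose a b (x::nat)"
  by (auto simp: transpose_def)

lemma shft_perm:
  assumes "\<tau> permutes {1..m}"
  shows "shft n m \<tau> permutes {n+1..n+m} \<and> sign (shft n m \<tau>) = sign \<tau>"
  using assms finite_atLeastAtMost
proof (induction \<tau> rule: permutes_induct)
  case id
  have e: "shft n m id = id" by (auto simp: fun_eq_iff shft_def)
  show ?case unfolding e using permutes_id by blast
next
  case (swap a b p)
  have eq: "shft n m (transpose a b \<circ> p) = transpose (n+a) (n+b) \<circ> shft n m p"
  proof
    fix j
    show "shft n m (transpose a b \<circ> p) j = (transpose (n+a) (n+b) \<circ> shft n m p) j"
    proof (cases "n < j \<and> j \<le> n + m")
      case True then show ?thesis by (simp add: shft_def transpose_shift)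
    next
      case False
      then have "j \<noteq> n + a" "j \<noteq> n + b" using swap by auto
      moreover have "\<And>q. shft n m q j = j" using False by (auto simp: shft_def)
      ultimately show ?thesis by simp
    qed
  qed
  have t: "transpose (n+a) (n+b) permutes {n+1..n+m}" using swap by (intro permutes_swap_id) auto
  have pp: "shft n m (transpose a b \<circ> p) permutes {n+1..n+m}"
    unfolding eq using t swap by (blast intro: permutes_compose)
  have "permutation (shft n m p)" "permutation (transpose (n+a) (n+b))"
    using swap t permutation_permutes by blast+
  then have "sign (shft n m (transpose a b \<circ> p)) = - sign p"
    unfolding eq using swap by (simp add: sign_compose sign_swap_id)
  moreover have "permutation p" using swap permutation_permutes by blast
  then have "sign (transpose a b \<circ> p) = - sign p"
    using swap by (simp add: sign_compose sign_swap_id permutation_swap_id)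
  ultimately show ?case using pp by (simp only: simp_thms)
qed

definition blk :: "nat \<Rightarrow> nat \<Rightarrow> (nat \<Rightarrow> nat) \<Rightarrow> (nat \<Rightarrow> nat) \<Rightarrow> nat \<Rightarrow> nat" where
  "blk n m \<tau>1 \<tau>2 = \<tau>1 \<circ> shft n m \<tau>2"

lemma blk_props:
  assumes t1: "\<tau>1 permutes {1..n}" and t2: "\<tau>2 permutes {1..m}"
  shows "blk n m \<tau>1 \<tau>2 permutes {1..n+m}"
    and "sign (blk n m \<tau>1 \<tau>2) = sign \<tau>1 * sign \<tau>2"
    and "\<And>j. j \<in> {1..n} \<Longrightarrow> blk n m \<tau>1 \<tau>2 j = \<tau>1 j"
    and "\<And>j. j \<in> {1..m} \<Longrightarrow> blk n m \<tau>1 \<tau>2 (n + j) = n + \<tau>2 j"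
    and "\<And>j. j \<in> {1..n} \<Longrightarrow> \<tau>1 j \<in> {1..n}"
    and "\<And>j. j \<in> {1..m} \<Longrightarrow> \<tau>2 j \<in> {1..m}"
proof -
  note sp = shft_perm[OF t2, of n]
  have a: "\<tau>1 permutes {1..n+m}" by (rule permutes_subset[OF t1]) auto
  have b: "shft n m \<tau>2 permutes {1..n+m}" by (rule permutes_subset[OF sp[THEN conjunct1]]) auto
  show "blk n m \<tau>1 \<tau>2 permutes {1..n+m}" unfolding blk_def by (rule permutes_compose[OF b a])
  have "permutation \<tau>1" "permutation (shft n m \<tau>2)" using a b permutation_permutes by blast+
  then show "sign (blk n m \<tau>1 \<tau>2) = sign \<tau>1 * sign \<tau>2"
    unfolding blk_def using sp by (simp add: sign_compose)
  show "\<And>j. j \<in> {1..n} \<Longrightarrow> blk n m \<tau>1 \<tau>2 j = \<tau>1 j" by (simp add: blk_def shft_def)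
  show "\<And>j. j \<in> {1..n} \<Longrightarrow> \<tau>1 j \<in> {1..n}" using t1 by (metis permutes_in_image)
  show i2: "\<And>j. j \<in> {1..m} \<Longrightarrow> \<tau>2 j \<in> {1..m}" using t2 by (metis permutes_in_image)
  fix j assume j: "j \<in> {1..m}"
  have "\<tau>1 (n + \<tau>2 j) = n + \<tau>2 j" using i2[OF j] by (intro permutes_not_in[OF t1]) auto
  then show "blk n m \<tau>1 \<tau>2 (n + j) = n + \<tau>2 j" using j by (simp add: blk_def shft_def)
qed




definition Iof :: "nat \<Rightarrow> nat \<Rightarrow> (nat \<Rightarrow> nat) \<Rightarrow> nat set" where
  "Iof n m \<sigma> = {j \<in> {1..n+m}. \<sigma> j \<le> n}"
definition t1 :: "nat \<Rightarrow> nat \<Rightarrow> (nat \<Rightarrow> nat) \<Rightarrow> nat \<Rightarrow> nat" where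
  "t1 n m \<sigma> j = (if j \<in> {1..n} then \<sigma> (pI n m (Iof n m \<sigma>) j) else j)"
definition t2 :: "nat \<Rightarrow> nat \<Rightarrow> (nat \<Rightarrow> nat) \<Rightarrow> nat \<Rightarrow> nat" where
  "t2 n m \<sigma> j = (if j \<in> {1..m} then \<sigma> (pI n m (Iof n m \<sigma>) (n + j)) - n else j)"

lemma pI_mem:
  assumes I: "I \<subseteq> {1..n+m}" "card I = n" and i: "i \<in> {1..n+m}"
  shows "pI n m I i \<in> I \<longleftrightarrow> i \<le> n"
proof (cases "i \<le> n")
  case True
  then have "i \<in> {1..n}" using i by auto
  then show ?thesis using pI_props(4)[OF I] True by (auto dest: bij_betw_apply)
next
  case False
  then have "i \<in> {n+1..n+m}" using i by auto
  then have "pI n m I i \<in> {1..n+m} - I" using pI_props(5)[OF I] by (auto dest: bij_betw_apply)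
  then show ?thesis using False by auto
qed

lemma blk_le:
  assumes t1: "\<tau>1 permutes {1..n}" and t2: "\<tau>2 permutes {1..m}" and i: "i \<in> {1..n+m}"
  shows "blk n m \<tau>1 \<tau>2 i \<le> n \<longleftrightarrow> i \<le> n"
proof (cases "i \<le> n")
  case True
  then have "i \<in> {1..n}" using i by auto
  then show ?thesis using blk_props[OF t1 t2] True by auto
next
  case False
  define k where "k = i - n"
  have k: "i = n + k" "k \<in> {1..m}" using i False by (auto simp: k_def)
  then show ?thesis using blk_props(4,6)[OF t1 t2, of k] False by auto
qed

lemma dec_smap:
  assumes I: "I \<subseteq> {1..n+m}" "card I = n"
    and t1: "\<tau>1 permutes {1..n}" and t2: "\<tau>2 permutes {1..m}"
  defines "\<sigma> \<equiv> blk n m \<tau>1 \<tau>2 \<circ> inv (pI n m I)"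
  shows "Iof n m \<sigma> = I" "t1 n m \<sigma> = \<tau>1" "t2 n m \<sigma> = \<tau>2"
proof -
  let ?p = "pI n m I"
  have pp: "?p permutes {1..n+m}" using pI_props(1)[OF I] .
  have sp: "\<sigma> (?p i) = blk n m \<tau>1 \<tau>2 i" for i
    unfolding \<sigma>_def using pp by (simp add: permutes_inverses)
  show iof: "Iof n m \<sigma> = I"
  proof (rule set_eqI)
    fix j
    obtain i where j: "j = ?p i" using pp by (metis permutes_inverses(1))
    have iS: "j \<in> {1..n+m} \<longleftrightarrow> i \<in> {1..n+m}" using pp j by (metis permutes_in_image)
    show "j \<in> Iof n m \<sigma> \<longleftrightarrow> j \<in> I"
    proof (cases "i \<in> {1..n+m}")
      case True
      then show ?thesis using iS j sp blk_le[OF t1 t2 True] pI_mem[OF I True]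
        by (auto simp: Iof_def)
    next
      case False then show ?thesis using iS j I by (auto simp: Iof_def)
    qed
  qed
  show "t1 n m \<sigma> = \<tau>1"
  proof
    fix j show "t1 n m \<sigma> j = \<tau>1 j"
    proof (cases "j \<in> {1..n}")
      case True then show ?thesis using sp blk_props(3)[OF t1 t2 True] by (simp add: t1_def iof)
    next
      case False then show ?thesis using permutes_not_in[OF t1 False] False by (auto simp: t1_def)
    qed
  qed
  show "t2 n m \<sigma> = \<tau>2"
  proof
    fix j show "t2 n m \<sigma> j = \<tau>2 j"
    proof (cases "j \<in> {1..m}")
      case True then show ?thesis using sp blk_props(4)[OF t1 t2 True] by (simp add: t2_def iof)
    next
      case False then show ?thesis using permutes_not_in[OF t2 False] False by (auto simp: t2_def)
    qed
  qed
qed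


lemma dec_props:
  assumes \<sigma>: "\<sigma> permutes {1..n+m}"
  defines "I \<equiv> Iof n m \<sigma>"
  shows "I \<subseteq> {1..n+m}" "card I = n" "t1 n m \<sigma> permutes {1..n}" "t2 n m \<sigma> permutes {1..m}"
    "blk n m (t1 n m \<sigma>) (t2 n m \<sigma>) \<circ> inv (pI n m I) = \<sigma>"
proof -
  let ?S = "{1..n+m}"
  have bS: "bij_betw \<sigma> ?S ?S" using \<sigma> by (rule permutes_imp_bij)
  have inj: "inj \<sigma>" using \<sigma> by (rule permutes_inj)
  show IS: "I \<subseteq> ?S" by (auto simp: I_def Iof_def)
  have imI: "\<sigma> ` I = {1..n}"
  proof
    have "\<And>x. x \<in> ?S \<Longrightarrow> \<sigma> x \<in> ?S" using \<sigma> by (metis permutes_in_image)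
    then show "\<sigma> ` I \<subseteq> {1..n}" by (force simp: I_def Iof_def)
    show "{1..n} \<subseteq> \<sigma> ` I"
    proof
      fix y assume y: "y \<in> {1..n}"
      have x: "\<sigma> (inv \<sigma> y) = y" using \<sigma> by (simp add: permutes_inverses)
      have "inv \<sigma> y \<in> ?S" using y permutes_inv[OF \<sigma>] by (metis permutes_in_image atLeastAtMost_iff trans_le_add1)
      then have "inv \<sigma> y \<in> I" using x y by (auto simp: I_def Iof_def)
      then show "y \<in> \<sigma> ` I" using x by (metis image_eqI)
    qed
  qed
  have bI: "bij_betw \<sigma> I {1..n}" by (rule bij_betw_subset[OF bS IS imI])
  show cI: "card I = n" using bij_betw_same_card[OF bI] by simp
  have "\<sigma> ` (?S - I) = \<sigma> ` ?S - \<sigma> ` I" by (rule image_set_diff[OF inj])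
  also have "\<dots> = {n+1..n+m}" using bij_betw_imp_surj_on[OF bS] imI by auto
  finally have bII: "bij_betw \<sigma> (?S - I) {n+1..n+m}" by (intro bij_betw_subset[OF bS]) auto
  note P = pI_props[OF IS cI]
  let ?p = "pI n m I"
  have "bij_betw (\<sigma> \<circ> ?p) {1..n} {1..n}" by (rule bij_betw_trans[OF P(4) bI])
  then have "bij_betw (t1 n m \<sigma>) {1..n} {1..n}"
    by (subst bij_betw_cong[where g="\<sigma> \<circ> ?p"]) (auto simp: t1_def I_def)
  then show T1: "t1 n m \<sigma> permutes {1..n}"
    by (rule bij_imp_permutes) (auto simp: t1_def)
  have s1: "bij_betw (\<lambda>j. n + j) {1..m} {n+1..n+m}"
    by (rule bij_betw_byWitness[where f'="\<lambda>j. j - n"]) auto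
  have s2: "bij_betw (\<lambda>j. j - n) {n+1..n+m} {1..m}"
    by (rule bij_betw_byWitness[where f'="\<lambda>j. n + j"]) auto
  have "bij_betw ((\<lambda>j. j - n) \<circ> ((\<sigma> \<circ> ?p) \<circ> (\<lambda>j. n + j))) {1..m} {1..m}"
    by (rule bij_betw_trans[OF bij_betw_trans[OF s1 bij_betw_trans[OF P(5) bII]] s2])
  then have "bij_betw (t2 n m \<sigma>) {1..m} {1..m}"
    by (subst bij_betw_cong[where g="(\<lambda>j. j - n) \<circ> ((\<sigma> \<circ> ?p) \<circ> (\<lambda>j. n + j))"]) (auto simp: t2_def I_def)
  then show T2: "t2 n m \<sigma> permutes {1..m}"
    by (rule bij_imp_permutes) (auto simp: t2_def)
  note B = blk_props[OF T1 T2]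
  have eq: "blk n m (t1 n m \<sigma>) (t2 n m \<sigma>) = \<sigma> \<circ> ?p"
  proof
    fix i
    show "blk n m (t1 n m \<sigma>) (t2 n m \<sigma>) i = (\<sigma> \<circ> ?p) i"
    proof (cases "i \<in> {1..n}")
      case True then show ?thesis using B(3)[OF True] by (simp add: t1_def I_def)
    next
      case F1: False
      show ?thesis
      proof (cases "i \<in> {n+1..n+m}")
        case True
        define k where "k = i - n"
        have k: "i = n + k" "k \<in> {1..m}" using True by (auto simp: k_def)
        have "?p (n + k) \<in> ?S - I" using bij_betw_apply[OF P(5) True] k(1) by simp
        then have "\<sigma> (?p (n + k)) \<in> {n+1..n+m}" using bII by (auto dest: bij_betw_apply)
        then show ?thesis using B(4)[OF k(2)] k by (simp add: t2_def I_def)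
      next
        case False
        then have "i \<notin> ?S" using F1 by auto
        then show ?thesis using permutes_not_in[OF B(1)] permutes_not_in[OF P(1)] permutes_not_in[OF \<sigma>]
          by simp
      qed
    qed
  qed
  show "blk n m (t1 n m \<sigma>) (t2 n m \<sigma>) \<circ> inv ?p = \<sigma>"
    unfolding eq o_assoc[symmetric] permutes_inv_o(1)[OF P(1)] by simp
qed




definition sm :: "nat \<Rightarrow> nat \<Rightarrow> nat set \<Rightarrow> (nat \<Rightarrow> nat) \<times> (nat \<Rightarrow> nat) \<Rightarrow> nat \<Rightarrow> nat" where
  "sm n m I y = blk n m (fst y) (snd y) \<circ> inv (pI n m I)"

lemma split_range: "{1..n+m} = {1..n} \<union> (\<lambda>j. n + j) ` {1..m::nat}"
  by (auto simp: image_iff)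

lemma term_I:
  fixes \<phi> :: "nat \<Rightarrow> 'a \<Rightarrow> 'a::field" and \<beta> :: "nat \<Rightarrow> 'a"
  assumes I: "I \<subseteq> {1..n+m}" "card I = n"
  defines "II \<equiv> {1..n+m} - I"
  defines "F \<equiv> (\<lambda>\<sigma>. of_int (sign \<sigma>) * (\<Prod>j\<in>{1..n+m}. \<phi> (\<sigma> j) (\<beta> j)))"
  shows "of_int (sign (pI n m I)) * (detn n (\<lambda>j k. \<phi> k (\<beta> (idx I j))) * detn m (\<lambda>j k. \<phi> (n + k) (\<beta> (idx II j))))
    = (\<Sum>y\<in>{\<tau>. \<tau> permutes {1..n}} \<times> {\<tau>. \<tau> permutes {1..m}}. F (sm n m I y))"
proof -
  let ?p = "pI n m I"
  note P = pI_props[OF I]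
  have pp: "permutation ?p" using P(1) permutation_permutes by blast
  have one: "F (sm n m I (\<tau>1, \<tau>2)) = of_int (sign ?p) *
     ((of_int (sign \<tau>1) * (\<Prod>j\<in>{1..n}. \<phi> (\<tau>1 j) (\<beta> (idx I j)))) *
      (of_int (sign \<tau>2) * (\<Prod>j\<in>{1..m}. \<phi> (n + \<tau>2 j) (\<beta> (idx II j)))))"
    if t1: "\<tau>1 permutes {1..n}" and t2: "\<tau>2 permutes {1..m}" for \<tau>1 \<tau>2
  proof -
    note B = blk_props[OF t1 t2]
    let ?b = "blk n m \<tau>1 \<tau>2"
    have pb: "permutation ?b" using B(1) permutation_permutes by blast
    have pi: "permutation (inv ?p)" using pp by (simp add: permutation_inverse)
    have sg: "sign (?b \<circ> inv ?p) = sign \<tau>1 * sign \<tau>2 * sign ?p"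
      using sign_compose[OF pb pi] sign_inverse[OF pp] B(2) by simp
    have "(\<Prod>j\<in>{1..n+m}. \<phi> ((?b \<circ> inv ?p) j) (\<beta> j)) =
        (\<Prod>i\<in>{1..n+m}. \<phi> ((?b \<circ> inv ?p) (?p i)) (\<beta> (?p i)))"
      by (rule prod.reindex_bij_betw[symmetric, OF permutes_imp_bij[OF P(1)]])
    also have "\<dots> = (\<Prod>i\<in>{1..n+m}. \<phi> (?b i) (\<beta> (?p i)))"
      using P(1) by (simp add: permutes_inverses)
    also have "\<dots> = (\<Prod>i\<in>{1..n}. \<phi> (?b i) (\<beta> (?p i))) * (\<Prod>i\<in>(\<lambda>j. n + j) ` {1..m}. \<phi> (?b i) (\<beta> (?p i)))"
      unfolding split_range by (rule prod.union_disjoint) auto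
    also have "(\<Prod>i\<in>(\<lambda>j. n + j) ` {1..m}. \<phi> (?b i) (\<beta> (?p i))) = (\<Prod>j\<in>{1..m}. \<phi> (?b (n + j)) (\<beta> (?p (n + j))))"
      by (subst prod.reindex) auto
    also have "\<dots> = (\<Prod>j\<in>{1..m}. \<phi> (n + \<tau>2 j) (\<beta> (idx II j)))"
      by (rule prod.cong) (simp_all add: B(4) P(3) II_def)
    also have "(\<Prod>i\<in>{1..n}. \<phi> (?b i) (\<beta> (?p i))) = (\<Prod>j\<in>{1..n}. \<phi> (\<tau>1 j) (\<beta> (idx I j)))"
      by (rule prod.cong) (simp_all add: B(3) P(2))
    finally show ?thesis unfolding F_def sm_def using sg by (simp add: ac_simps)
  qed
  have "detn n (\<lambda>j k. \<phi> k (\<beta> (idx I j))) * detn m (\<lambda>j k. \<phi> (n + k) (\<beta> (idx II j))) =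
     (\<Sum>\<tau>1\<in>{\<tau>. \<tau> permutes {1..n}}. \<Sum>\<tau>2\<in>{\<tau>. \<tau> permutes {1..m}}.
        (of_int (sign \<tau>1) * (\<Prod>j\<in>{1..n}. \<phi> (\<tau>1 j) (\<beta> (idx I j)))) *
        (of_int (sign \<tau>2) * (\<Prod>j\<in>{1..m}. \<phi> (n + \<tau>2 j) (\<beta> (idx II j)))))"
    unfolding detn_def by (rule sum_product)
  also have "\<dots> = (\<Sum>y\<in>{\<tau>. \<tau> permutes {1..n}} \<times> {\<tau>. \<tau> permutes {1..m}}.
        (of_int (sign (fst y)) * (\<Prod>j\<in>{1..n}. \<phi> (fst y j) (\<beta> (idx I j)))) *
        (of_int (sign (snd y)) * (\<Prod>j\<in>{1..m}. \<phi> (n + snd y j) (\<beta> (idx II j)))))"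
    by (subst sum.cartesian_product) (simp add: case_prod_unfold)
  finally have "of_int (sign ?p) * (detn n (\<lambda>j k. \<phi> k (\<beta> (idx I j))) * detn m (\<lambda>j k. \<phi> (n + k) (\<beta> (idx II j)))) =
     (\<Sum>y\<in>{\<tau>. \<tau> permutes {1..n}} \<times> {\<tau>. \<tau> permutes {1..m}}. of_int (sign ?p) *
        ((of_int (sign (fst y)) * (\<Prod>j\<in>{1..n}. \<phi> (fst y j) (\<beta> (idx I j)))) *
        (of_int (sign (snd y)) * (\<Prod>j\<in>{1..m}. \<phi> (n + snd y j) (\<beta> (idx II j))))))"
    by (simp add: sum_distrib_left)
  also have "\<dots> = (\<Sum>y\<in>{\<tau>. \<tau> permutes {1..n}} \<times> {\<tau>. \<tau> permutes {1..m}}. F (sm n m I y))"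
  proof (rule sum.cong[OF refl])
    fix y assume "y \<in> {\<tau>. \<tau> permutes {1..n}} \<times> {\<tau>. \<tau> permutes {1..m}}"
    then have "fst y permutes {1..n}" "snd y permutes {1..m}" by auto
    from one[OF this] show "of_int (sign ?p) *
        ((of_int (sign (fst y)) * (\<Prod>j\<in>{1..n}. \<phi> (fst y j) (\<beta> (idx I j)))) *
        (of_int (sign (snd y)) * (\<Prod>j\<in>{1..m}. \<phi> (n + snd y j) (\<beta> (idx II j))))) = F (sm n m I y)"
      by simp
  qed
  finally show ?thesis .
qed


lemma laplace:
  fixes \<phi> :: "nat \<Rightarrow> 'a \<Rightarrow> 'a::field" and \<beta> :: "nat \<Rightarrow> 'a"
  shows "detn (n+m) (\<lambda>j k. \<phi> k (\<beta> j)) =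
    (\<Sum>I\<in>{I. I \<subseteq> {1..n+m} \<and> card I = n}. of_int (sign (pI n m I)) *
       (detn n (\<lambda>j k. \<phi> k (\<beta> (idx I j))) * detn m (\<lambda>j k. \<phi> (n + k) (\<beta> (idx ({1..n+m} - I) j)))))"
proof -
  define F where "F = (\<lambda>\<sigma>. of_int (sign \<sigma>) * (\<Prod>j\<in>{1..n+m}. \<phi> (\<sigma> j) (\<beta> j)))"
  define \<I> where "\<I> = {I. I \<subseteq> {1..n+m} \<and> card I = n}"
  define T where "T = {\<tau>. \<tau> permutes {1..n}} \<times> {\<tau>. \<tau> permutes {1..m::nat}}"
  have fI: "finite \<I>" unfolding \<I>_def
    by (rule finite_subset[of _ "Pow {1..n+m}"]) auto
  have fT: "finite T" unfolding T_def by (simp add: finite_permutations)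
  have "(\<Sum>I\<in>\<I>. of_int (sign (pI n m I)) *
       (detn n (\<lambda>j k. \<phi> k (\<beta> (idx I j))) * detn m (\<lambda>j k. \<phi> (n + k) (\<beta> (idx ({1..n+m} - I) j)))))
     = (\<Sum>I\<in>\<I>. \<Sum>y\<in>T. F (sm n m I y))"
  proof (rule sum.cong[OF refl])
    fix I assume "I \<in> \<I>"
    then have I: "I \<subseteq> {1..n+m}" "card I = n" by (auto simp: \<I>_def)
    show "of_int (sign (pI n m I)) *
       (detn n (\<lambda>j k. \<phi> k (\<beta> (idx I j))) * detn m (\<lambda>j k. \<phi> (n + k) (\<beta> (idx ({1..n+m} - I) j))))
     = (\<Sum>y\<in>T. F (sm n m I y))"
      unfolding T_def F_def by (rule term_I[OF I])
  qed
  also have "\<dots> = (\<Sum>x\<in>Sigma \<I> (\<lambda>_. T). F (sm n m (fst x) (snd x)))"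
    by (subst sum.Sigma[OF fI]) (auto simp: fT case_prod_unfold)
  also have "\<dots> = (\<Sum>\<sigma>\<in>{\<sigma>. \<sigma> permutes {1..n+m}}. F \<sigma>)"
  proof (rule sum.reindex_bij_witness[where j="\<lambda>x. sm n m (fst x) (snd x)"
        and i="\<lambda>\<sigma>. (Iof n m \<sigma>, (t1 n m \<sigma>, t2 n m \<sigma>))"])
    fix a assume a: "a \<in> Sigma \<I> (\<lambda>_. T)"
    then obtain I \<tau>1 \<tau>2 where x: "a = (I, (\<tau>1, \<tau>2))" "I \<subseteq> {1..n+m}" "card I = n"
      "\<tau>1 permutes {1..n}" "\<tau>2 permutes {1..m}" by (auto simp: \<I>_def T_def)
    show "(Iof n m (sm n m (fst a) (snd a)), t1 n m (sm n m (fst a) (snd a)), t2 n m (sm n m (fst a) (snd a))) = a"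
      using dec_smap[OF x(2,3,4,5)] x(1) by (simp add: sm_def)
    have "blk n m \<tau>1 \<tau>2 \<circ> inv (pI n m I) permutes {1..n+m}"
      by (rule permutes_compose[OF permutes_inv[OF pI_props(1)[OF x(2,3)]] blk_props(1)[OF x(4,5)]])
    then show "sm n m (fst a) (snd a) \<in> {\<sigma>. \<sigma> permutes {1..n+m}}" using x(1) by (simp add: sm_def)
  next
    fix \<sigma> assume "\<sigma> \<in> {\<sigma>. \<sigma> permutes {1..n+m}}"
    then have s: "\<sigma> permutes {1..n+m}" by simp
    note D = dec_props[OF s]
    show "sm n m (fst (Iof n m \<sigma>, t1 n m \<sigma>, t2 n m \<sigma>)) (snd (Iof n m \<sigma>, t1 n m \<sigma>, t2 n m \<sigma>)) = \<sigma>"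
      using D(5) by (simp add: sm_def)
    show "(Iof n m \<sigma>, t1 n m \<sigma>, t2 n m \<sigma>) \<in> Sigma \<I> (\<lambda>_. T)"
      using D(1-4) by (simp add: \<I>_def T_def)
  qed simp
  finally show ?thesis unfolding \<I>_def F_def detn_def by simp
qed




lemma Delta_cong: "(\<And>j. j \<in> {1..p} \<Longrightarrow> v j = v' j) \<Longrightarrow> Delta c p v = Delta c p v'"
  unfolding Delta_def by (rule prod.cong) auto

lemma delta_I:
  fixes \<beta> :: "nat \<Rightarrow> 'a::field"
  assumes I: "I \<subseteq> {1..n+m}" "card I = n"
  defines "II \<equiv> {1..n+m} - I"
  shows "Delta c (n+m) \<beta> * of_int (sign (pI n m I)) =
    Delta c n (\<lambda>j. \<beta> (idx I j)) * Delta c m (\<lambda>j. \<beta> (idx II j)) * gset c \<beta> II I"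
proof -
  let ?p = "pI n m I"
  note P = pI_props[OF I]
  have "Delta c (n+m) \<beta> * of_int (sign ?p) = Delta c (n+m) (\<beta> \<circ> ?p)"
    using Delta_perm[OF P(1), of c \<beta>] eps_sign[OF P(1)] by (simp add: mult.commute)
  also have "\<dots> = Delta c n (\<beta> \<circ> ?p) * Delta c m (\<lambda>j. (\<beta> \<circ> ?p) (n + j)) *
     (\<Prod>j\<in>{1..m}. \<Prod>k\<in>{1..n}. gfun c ((\<beta> \<circ> ?p) (n + j)) ((\<beta> \<circ> ?p) k))"
    by (rule Delta_split)
  also have "Delta c n (\<beta> \<circ> ?p) = Delta c n (\<lambda>j. \<beta> (idx I j))"
    by (rule Delta_cong) (simp add: P(2))
  also have "Delta c m (\<lambda>j. (\<beta> \<circ> ?p) (n + j)) = Delta c m (\<lambda>j. \<beta> (idx II j))"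
    by (rule Delta_cong) (simp add: P(3) II_def)
  also have "(\<Prod>j\<in>{1..m}. \<Prod>k\<in>{1..n}. gfun c ((\<beta> \<circ> ?p) (n + j)) ((\<beta> \<circ> ?p) k)) = gset c \<beta> II I"
  proof -
    have s1: "bij_betw (\<lambda>j. n + j) {1..m} {n+1..n+m}"
      by (rule bij_betw_byWitness[where f'="\<lambda>j. j - n"]) auto
    have b2: "bij_betw (?p \<circ> (\<lambda>j. n + j)) {1..m} II"
      using bij_betw_trans[OF s1 P(5)] by (simp add: II_def)
    have "(\<Prod>j\<in>{1..m}. \<Prod>k\<in>{1..n}. gfun c ((\<beta> \<circ> ?p) (n + j)) ((\<beta> \<circ> ?p) k)) =
        (\<Prod>j\<in>{1..m}. \<Prod>v\<in>I. gfun c (\<beta> ((?p \<circ> (\<lambda>j. n + j)) j)) (\<beta> v))"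
    proof (rule prod.cong[OF refl])
      fix j
      show "(\<Prod>k\<in>{1..n}. gfun c ((\<beta> \<circ> ?p) (n + j)) ((\<beta> \<circ> ?p) k)) =
        (\<Prod>v\<in>I. gfun c (\<beta> ((?p \<circ> (\<lambda>j. n + j)) j)) (\<beta> v))"
        using prod.reindex_bij_betw[OF P(4), where g="\<lambda>v. gfun c (\<beta> (?p (n + j))) (\<beta> v)"]
        by simp
    qed
    also have "\<dots> = (\<Prod>u\<in>II. \<Prod>v\<in>I. gfun c (\<beta> u) (\<beta> v))"
      by (rule prod.reindex_bij_betw[OF b2, where g="\<lambda>u. \<Prod>v\<in>I. gfun c (\<beta> u) (\<beta> v)"])
    finally show ?thesis unfolding gset_def .
  qed
  finally show ?thesis .
qed

theorem lemmaC2: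
  fixes c :: "'a::field" and n m :: nat
    and \<phi> :: "nat \<Rightarrow> 'a \<Rightarrow> 'a" and \<beta> :: "nat \<Rightarrow> 'a"
  assumes "c \<noteq> 0"
  shows "Phi c (n + m) \<phi> \<beta> =
    (\<Sum>I | I \<subseteq> {1..n+m} \<and> card I = n.
       let II = {1..n+m} - I in
       Delta c n (\<lambda>j. \<beta> (idx I j)) * detn n (\<lambda>j k. \<phi> k (\<beta> (idx I j)))
     * (Delta c m (\<lambda>j. \<beta> (idx II j)) * detn m (\<lambda>j k. \<phi> (n + k) (\<beta> (idx II j))))
     * gset c \<beta> II I)"
proof -
  have "Phi c (n + m) \<phi> \<beta> = (\<Sum>I\<in>{I. I \<subseteq> {1..n+m} \<and> card I = n}. Delta c (n+m) \<beta> * (of_int (sign (pI n m I)) *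
       (detn n (\<lambda>j k. \<phi> k (\<beta> (idx I j))) * detn m (\<lambda>j k. \<phi> (n + k) (\<beta> (idx ({1..n+m} - I) j))))))"
    unfolding Phi_def laplace by (simp add: sum_distrib_left)
  also have "\<dots> = (\<Sum>I | I \<subseteq> {1..n+m} \<and> card I = n.
       let II = {1..n+m} - I in
       Delta c n (\<lambda>j. \<beta> (idx I j)) * detn n (\<lambda>j k. \<phi> k (\<beta> (idx I j)))
     * (Delta c m (\<lambda>j. \<beta> (idx II j)) * detn m (\<lambda>j k. \<phi> (n + k) (\<beta> (idx II j))))
     * gset c \<beta> II I)"
  proof (rule sum.cong[OF refl])
    fix I assume "I \<in> {I. I \<subseteq> {1..n+m} \<and> card I = n}"
    then have I: "I \<subseteq> {1..n+m}" "card I = n" by auto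
    have d: "Delta c (n+m) \<beta> * of_int (sign (pI n m I)) =
       Delta c n (\<lambda>j. \<beta> (idx I j)) * Delta c m (\<lambda>j. \<beta> (idx ({1..n+m} - I) j)) * gset c \<beta> ({1..n+m} - I) I"
      by (rule delta_I[OF I])
    show "Delta c (n+m) \<beta> * (of_int (sign (pI n m I)) *
       (detn n (\<lambda>j k. \<phi> k (\<beta> (idx I j))) * detn m (\<lambda>j k. \<phi> (n + k) (\<beta> (idx ({1..n+m} - I) j))))) =
       (let II = {1..n+m} - I in
       Delta c n (\<lambda>j. \<beta> (idx I j)) * detn n (\<lambda>j k. \<phi> k (\<beta> (idx I j)))
     * (Delta c m (\<lambda>j. \<beta> (idx II j)) * detn m (\<lambda>j k. \<phi> (n + k) (\<beta> (idx II j))))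
     * gset c \<beta> II I)"
      unfolding Let_def mult.assoc[symmetric] d by (simp add: ac_simps)
  qed
  finally show ?thesis .
qed


end
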